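(* Let $r\in\mathbb{N}$ with $r\ge 2$. Let $B$ be the squarefree sequence over $C_2^r$ whose set of terms is $C_2^{r}\setminus \{0\}$ (each non-zero element occurring exactly once). Then $B$ is a zero-sum sequence and $\max \mathsf{L}(B) = \lfloor (2^r - 1)/3 \rfloor$.
   Context: $C_2^r$ is the elementary abelian $2$-group of rank $r$. A sequence is a finite unordered list of group elements with repetitions; squarefree means no repetitions; a minimal zero-sum sequence is a non-empty sequence with sum $0$ having no proper non-empty zero-sum subsequence; for a zero-sum sequence $B$, $\mathsf{L}(B)$ is the set of all $t$ such that $B$ can be written as a product of $t$ minimal zero-sum sequences. *)

theory Defs
  imports "HOL-Library.Z2" "HOL-Library.Multiset" "HOL-Analysis.Finite_Cartesian_Product"
begin

text \<open>The elementary abelian 2-group of rank r is modelled as bit ^ 'n with r = CARD('n):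
  vectors over the field Z/2Z (type bit) indexed by a finite type 'n, with pointwise addition.\<close>

definition zero_sum_seq :: "'a::comm_monoid_add multiset \<Rightarrow> bool" where
  "zero_sum_seq S \<longleftrightarrow> sum_mset S = 0"

definition minimal_zero_sum_seq :: "'a::comm_monoid_add multiset \<Rightarrow> bool" where
  "minimal_zero_sum_seq S \<longleftrightarrow> S \<noteq> {#} \<and> zero_sum_seq S \<and>
     (\<forall>T. T \<subseteq># S \<and> T \<noteq> {#} \<and> zero_sum_seq T \<longrightarrow> T = S)"

definition lengths :: "'a::comm_monoid_add multiset \<Rightarrow> nat set" where
  "lengths B = {t. \<exists>F :: 'a multiset multiset.
      (\<forall>A \<in># F. minimal_zero_sum_seq A) \<and> \<Sum>\<^sub># F = B \<and> size F = t}"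

end

theory Submission
  imports Defs "HOL-Library.Function_Algebras"
begin

type_synonym vv = "nat \<Rightarrow> bit"
declare add_bit_eq_xor[simp del]
lemma bit_self [simp]: "(a::bit) + a = 0" by (cases a) simp_all

lemma vv_self [simp]: "(x::vv) + x = 0" by (simp add: fun_eq_iff)
lemma vv_self2 [simp]: "(x::vv) + (x + y) = y"
  by (metis add.assoc add_0 vv_self)

lemma bit_cancel_r: "(a::bit) + c = b + c \<Longrightarrow> a = b" by (cases a; cases b; cases c) simp_all
lemma bit_cancel_l: "(c::bit) + a = c + b \<Longrightarrow> a = b" by (cases a; cases b; cases c) simp_all

definition V :: "nat \<Rightarrow> vv set" where "V r = {x. \<forall>i\<ge>r. x i = 0}"
definition e :: "nat \<Rightarrow> vv" where "e k = (\<lambda>i. if i = k then 1 else 0)"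

lemma V0: "V 0 = {0}" by (auto simp: V_def fun_eq_iff)

lemma V_Suc: "V (Suc r) = V r \<union> (\<lambda>x. x + e r) ` V r"
proof
  show "V (Suc r) \<subseteq> V r \<union> (\<lambda>x. x + e r) ` V r"
  proof
    fix x assume x: "x \<in> V (Suc r)"
    show "x \<in> V r \<union> (\<lambda>x. x + e r) ` V r"
    proof (cases "x r = 0")
      case True
      have "x \<in> V r" unfolding V_def
      proof (intro CollectI allI impI)
        fix i assume i: "r \<le> i"
        show "x i = 0"
        proof (cases "i = r")
          case True then show ?thesis using \<open>x r = 0\<close> by simp
        next
          case False then have "Suc r \<le> i" using i by simp
          then show ?thesis using x by (simp add: V_def)
        qed
      qed
      then show ?thesis by simp
    next
      case False
      then have x1: "x r = 1" by simp
      have "x + e r \<in> V r" unfolding V_def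
      proof (intro CollectI allI impI)
        fix i assume i: "r \<le> i"
        show "(x + e r) i = 0"
        proof (cases "i = r")
          case True then show ?thesis using x1 by (simp add: e_def)
        next
          case False then have "Suc r \<le> i" using i by simp
          then show ?thesis using x False by (simp add: V_def e_def)
        qed
      qed
      moreover have "x = (x + e r) + e r" by (simp add: add.assoc)
      ultimately show ?thesis by blast
    qed
  qed
next
  show "V r \<union> (\<lambda>x. x + e r) ` V r \<subseteq> V (Suc r)"
  proof
    fix y assume "y \<in> V r \<union> (\<lambda>x. x + e r) ` V r"
    then show "y \<in> V (Suc r)"
    proof
      assume "y \<in> V r" then show ?thesis by (simp add: V_def)
    next
      assume "y \<in> (\<lambda>x. x + e r) ` V r"
      then obtain z where z: "z \<in> V r" "y = z + e r" by blast
      show ?thesis unfolding V_def using z by (simp add: V_def e_def)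
    qed
  qed
qed

lemma V_disj: "V r \<inter> (\<lambda>x. x + e r) ` V r = {}"
proof -
  { fix y assume "y \<in> V r" "y \<in> (\<lambda>x. x + e r) ` V r"
    then obtain z where z: "z \<in> V r" "y = z + e r" by blast
    have "y r = 0" using \<open>y \<in> V r\<close> by (simp add: V_def)
    moreover have "y r = 1" using z by (simp add: V_def e_def)
    ultimately have False by simp }
  then show ?thesis by blast
qed

lemma finite_V: "finite (V r)" by (induction r) (simp_all add: V0 V_Suc)

lemma inj_transl: "inj_on (\<lambda>x. x + (c::vv)) A" by (rule inj_onI) simp

lemma card_V: "card (V r) = 2^r"
proof (induction r)
  case 0 then show ?case by (simp add: V0)
next
  case (Suc r)
  have "card (V (Suc r)) = card (V r) + card ((\<lambda>x. x + e r) ` V r)"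
    unfolding V_Suc by (rule card_Un_disjoint) (simp_all add: finite_V V_disj)
  also have "card ((\<lambda>x. x + e r) ` V r) = card (V r)" by (rule card_image[OF inj_transl])
  finally show ?case using Suc by simp
qed

lemma zero_V [simp]: "0 \<in> V r" by (simp add: V_def)

lemma V_r: "x \<in> V r \<Longrightarrow> x r = 0" by (simp add: V_def)
lemma V_Sr: "x \<in> V r \<Longrightarrow> x (Suc r) = 0" by (simp add: V_def)

definition f :: "nat \<Rightarrow> vv \<Rightarrow> vv" where
  "f r x = (\<lambda>i. if i = 0 then x (r-1) else if i = 1 then x 0 + x (r-1) else if i < r then x (i-1) else 0)"
definition g :: "nat \<Rightarrow> vv \<Rightarrow> vv" where "g r x = x + f r x"

lemma f_V: assumes "2 \<le> r" shows "f r x \<in> V r"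
  unfolding V_def
proof (intro CollectI allI impI)
  fix i assume "r \<le> i"
  then have "i \<noteq> 0" "i \<noteq> 1" "\<not> i < r" using assms by auto
  then show "f r x i = 0" unfolding f_def by simp
qed
lemma g_V: assumes "2 \<le> r" "x \<in> V r" shows "g r x \<in> V r"
  unfolding V_def
proof (intro CollectI allI impI)
  fix i assume "r \<le> i"
  then have "f r x i = 0" using f_V[OF assms(1)] by (simp add: V_def)
  moreover have "x i = 0" using assms(2) \<open>r \<le> i\<close> by (simp add: V_def)
  ultimately show "g r x i = 0" unfolding g_def by simp
qed

lemma inj_f: assumes r: "2 \<le> r" shows "inj_on (f r) (V r)"
proof (rule inj_onI)
  fix x y assume x: "x \<in> V r" and y: "y \<in> V r" and eq: "f r x = f r y"
  have h0: "x (r-1) = y (r-1)" using fun_cong[OF eq, of 0] by (simp add: f_def)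
  have "x 0 + x (r-1) = y 0 + y (r-1)" using fun_cong[OF eq, of 1] r by (simp add: f_def)
  then have h1: "x 0 = y 0" using h0 by simp
  have hk: "x k = y k" if "1 \<le> k" "k < r - 1" for k
  proof -
    have "Suc k < r" using that by linarith
    then show ?thesis using fun_cong[OF eq, of "k+1"] that by (simp add: f_def)
  qed
  show "x = y"
  proof
    fix k show "x k = y k"
    proof -
      consider "k = 0" | "1 \<le> k \<and> k < r - 1" | "k = r - 1" | "r \<le> k" using r by linarith
      then show ?thesis
      proof cases
        case 4 then show ?thesis using x y by (simp add: V_def)
      qed (use h0 h1 hk in auto)
    qed
  qed
qed

lemma inj_g: assumes r: "2 \<le> r" shows "inj_on (g r) (V r)"
proof (rule inj_onI)
  fix x y assume x: "x \<in> V r" and y: "y \<in> V r" and eq: "g r x = g r y"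
  have c: "x i + f r x i = y i + f r y i" for i using fun_cong[OF eq, of i] by (simp add: g_def)
  have e0: "x 0 + x (r-1) = y 0 + y (r-1)" using c[of 0] by (simp add: f_def)
  have e1: "x 1 + (x 0 + x (r-1)) = y 1 + (y 0 + y (r-1))" using c[of 1] r by (simp add: f_def)
  have h1: "x 1 = y 1" using e0 e1 by simp
  have ek: "x k + x (k-1) = y k + y (k-1)" if "2 \<le> k" "k < r" for k
    using c[of k] that by (simp add: f_def)
  have hk: "1 \<le> k \<longrightarrow> k < r \<longrightarrow> x k = y k" for k
  proof (induction k)
    case 0 then show ?case by simp
  next
    case (Suc k)
    show ?case
    proof (cases "k = 0")
      case True then show ?thesis using h1 by simp
    next
      case False
      show ?thesis
      proof (intro impI)
        assume "Suc k < r"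
        then have "x (Suc k) + x k = y (Suc k) + y k" using ek[of "Suc k"] False by simp
        moreover have "x k = y k" using Suc False \<open>Suc k < r\<close> by simp
        ultimately show "x (Suc k) = y (Suc k)" by simp
      qed
    qed
  qed
  have hr: "x (r-1) = y (r-1)" using hk[of "r-1"] r by simp
  have h0: "x 0 = y 0" using e0 hr by simp
  show "x = y"
  proof
    fix k show "x k = y k"
    proof (cases "r \<le> k")
      case True then show ?thesis using x y by (simp add: V_def)
    next
      case False then show ?thesis using hk[of k] h0 by (cases "k = 0") auto
    qed
  qed
qed

lemma f_img: "2 \<le> r \<Longrightarrow> f r ` V r = V r"
  by (rule endo_inj_surj) (auto simp: finite_V f_V inj_f)
lemma g_img: "2 \<le> r \<Longrightarrow> g r ` V r = V r"
  by (rule endo_inj_surj) (auto simp: finite_V g_V inj_g)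


definition good :: "nat \<Rightarrow> vv multiset multiset \<Rightarrow> bool" where
  "good r F \<longleftrightarrow> (\<forall>A\<in>#F. A \<noteq> {#} \<and> size A \<le> 4 \<and> sum_mset A = 0) \<and>
     sum_mset F = mset_set (V r - {0}) \<and> size F = (2^r - 1) div 3"

lemma tri_sum: "sum_mset (image_mset (\<lambda>x. {#a x, b x, c x#}) M) = image_mset a M + image_mset b M + image_mset c M"
  by (induction M) (simp_all add: add_ac)

lemma disj_by: "(\<And>y. y \<in> A \<Longrightarrow> h y = a) \<Longrightarrow> (\<And>y. y \<in> B \<Longrightarrow> h y = b) \<Longrightarrow> a \<noteq> b \<Longrightarrow> A \<inter> B = {}"
  by blast

lemma arith4: "(n::nat) \<ge> 1 \<Longrightarrow> (n - 1) div 3 + n = (4 * n - 1) div 3"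
proof -
  assume "n \<ge> 1"
  then have "4 * n - 1 = (n - 1) + n * 3" by simp
  then show ?thesis by simp
qed

lemma step:
  assumes r: "2 \<le> r" and G: "good r F"
  shows "good (Suc (Suc r)) (F + image_mset (\<lambda>x. {#x + e r, f r x + e (Suc r), g r x + (e r + e (Suc r))#}) (mset_set (V r)))"
proof -
  define u where "u = e r"
  define v where "v = e (Suc r)"
  define w where "w = u + v"
  define M where "M = mset_set (V r)"
  have atoms: "\<forall>A\<in>#F. A \<noteq> {#} \<and> size A \<le> 4 \<and> sum_mset A = 0"
    and sF: "sum_mset F = mset_set (V r - {0})" and szF: "size F = (2^r - 1) div 3"
    using G unfolding good_def by auto
  have atoms2: "A \<noteq> {#} \<and> size A \<le> 4 \<and> sum_mset A = 0"
    if A0: "A \<in># image_mset (\<lambda>x. {#x + u, f r x + v, g r x + w#}) M" for A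
  proof -
    obtain x where A: "A = {#x + u, f r x + v, g r x + w#}" using A0 by auto
    have "sum_mset A = 0" unfolding A g_def w_def by (simp add: add_ac)
    then show ?thesis using A by simp
  qed
  have iu: "image_mset (\<lambda>x. x + u) M = mset_set ((\<lambda>x. x + u) ` V r)"
    unfolding M_def by (rule image_mset_mset_set[OF inj_transl])
  have iv: "image_mset (\<lambda>x. f r x + v) M = mset_set ((\<lambda>x. x + v) ` V r)"
  proof -
    have "image_mset (\<lambda>x. f r x + v) M = image_mset (\<lambda>x. x + v) (image_mset (f r) M)"
      by (simp add: multiset.map_comp o_def)
    also have "image_mset (f r) M = M"
      unfolding M_def using image_mset_mset_set[OF inj_f[OF r]] f_img[OF r] by simp
    also have "image_mset (\<lambda>x. x + v) M = mset_set ((\<lambda>x. x + v) ` V r)"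
      unfolding M_def by (rule image_mset_mset_set[OF inj_transl])
    finally show ?thesis .
  qed
  have iw: "image_mset (\<lambda>x. g r x + w) M = mset_set ((\<lambda>x. x + w) ` V r)"
  proof -
    have "image_mset (\<lambda>x. g r x + w) M = image_mset (\<lambda>x. x + w) (image_mset (g r) M)"
      by (simp add: multiset.map_comp o_def)
    also have "image_mset (g r) M = M"
      unfolding M_def using image_mset_mset_set[OF inj_g[OF r]] g_img[OF r] by simp
    also have "image_mset (\<lambda>x. x + w) M = mset_set ((\<lambda>x. x + w) ` V r)"
      unfolding M_def by (rule image_mset_mset_set[OF inj_transl])
    finally show ?thesis .
  qed
  define h where "h = (\<lambda>y::vv. (y r, y (Suc r)))"
  have hV: "h y = (0, 0)" if "y \<in> V r - {0}" for y using that by (simp add: h_def V_def)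
  have hU: "h y = (1, 0)" if "y \<in> (\<lambda>x. x + u) ` V r" for y
    using that by (auto simp: h_def V_def u_def e_def)
  have hVv: "h y = (0, 1)" if "y \<in> (\<lambda>x. x + v) ` V r" for y
    using that by (auto simp: h_def V_def v_def e_def)
  have hW: "h y = (1, 1)" if "y \<in> (\<lambda>x. x + w) ` V r" for y
    using that by (auto simp: h_def V_def w_def u_def v_def e_def)
  have h0: "h 0 = (0, 0)" by (simp add: h_def)
  have d1: "(V r - {0}) \<inter> (\<lambda>x. x + u) ` V r = {}" by (rule disj_by[OF hV hU]) auto
  have d2: "(V r - {0}) \<inter> (\<lambda>x. x + v) ` V r = {}" by (rule disj_by[OF hV hVv]) auto
  have d3: "(V r - {0}) \<inter> (\<lambda>x. x + w) ` V r = {}" by (rule disj_by[OF hV hW]) auto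
  have d4: "(\<lambda>x. x + u) ` V r \<inter> (\<lambda>x. x + v) ` V r = {}" by (rule disj_by[OF hU hVv]) auto
  have d5: "(\<lambda>x. x + u) ` V r \<inter> (\<lambda>x. x + w) ` V r = {}" by (rule disj_by[OF hU hW]) auto
  have d6: "(\<lambda>x. x + v) ` V r \<inter> (\<lambda>x. x + w) ` V r = {}" by (rule disj_by[OF hVv hW]) auto
  have n1: "0 \<notin> (\<lambda>x. x + u) ` V r" using hU h0 by fastforce
  have n2: "0 \<notin> (\<lambda>x. x + v) ` V r" using hVv h0 by fastforce
  have n3: "0 \<notin> (\<lambda>x. x + w) ` V r" using hW h0 by fastforce
  have VV: "V (Suc (Suc r)) = V r \<union> (\<lambda>x. x + u) ` V r \<union> (\<lambda>x. x + v) ` V r \<union> (\<lambda>x. x + w) ` V r"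
  proof -
    have "(\<lambda>x. x + v) ` (\<lambda>x. x + u) ` V r = (\<lambda>x. x + w) ` V r"
      by (simp add: image_image w_def add.assoc)
    then show ?thesis unfolding V_Suc u_def v_def image_Un by auto
  qed
  have VV0: "V (Suc (Suc r)) - {0} = (V r - {0}) \<union> (\<lambda>x. x + u) ` V r \<union> (\<lambda>x. x + v) ` V r \<union> (\<lambda>x. x + w) ` V r"
    unfolding VV using n1 n2 n3 by blast
  have fin: "finite (V r - {0})" "finite ((\<lambda>x. x + u) ` V r)" "finite ((\<lambda>x. x + v) ` V r)"
    "finite ((\<lambda>x. x + w) ` V r)" by (simp_all add: finite_V)
  have "mset_set (V (Suc (Suc r)) - {0}) = mset_set (V r - {0}) + mset_set ((\<lambda>x. x + u) ` V r)
      + mset_set ((\<lambda>x. x + v) ` V r) + mset_set ((\<lambda>x. x + w) ` V r)"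
    unfolding VV0
    by (subst mset_set_Union, use fin d1 d2 d3 d4 d5 d6 in auto)+
  also have "\<dots> = sum_mset (F + image_mset (\<lambda>x. {#x + u, f r x + v, g r x + w#}) M)"
    unfolding sum_mset.union tri_sum iu iv iw sF by (simp add: add_ac)
  finally have sum: "sum_mset (F + image_mset (\<lambda>x. {#x + u, f r x + v, g r x + w#}) M) = mset_set (V (Suc (Suc r)) - {0})" ..
  have "size (F + image_mset (\<lambda>x. {#x + u, f r x + v, g r x + w#}) M) = (2^r - 1) div 3 + 2^r"
    by (simp add: szF M_def card_V)
  also have "\<dots> = (2^(Suc (Suc r)) - 1) div 3" using arith4[of "2^r"] by simp
  finally show ?thesis unfolding good_def using atoms atoms2 sum
    by (auto simp: u_def v_def w_def M_def)
qed


lemma vneq: "x i \<noteq> y i \<Longrightarrow> x \<noteq> y" by auto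

lemma V1: "V (Suc 0) = {0, e 0}" by (auto simp: V_Suc V0)
lemma V2: "V (Suc (Suc 0)) = {0, e 0, e 1, e 0 + e 1}"
  by (auto simp: V_Suc[of "Suc 0"] V1 add.commute)

lemma ne: "e 0 \<noteq> 0" "e 1 \<noteq> 0" "e 0 + e 1 \<noteq> 0" "e 0 \<noteq> e 1" "e 0 \<noteq> e 0 + e 1" "e 1 \<noteq> e 0 + e 1"
  by (rule vneq[of _ 0]; simp add: e_def; fail | rule vneq[of _ 1]; simp add: e_def)+

lemma V2' : "V (Suc (Suc 0)) - {0} = {e 0, e 1, e 0 + e 1}"
  using ne unfolding V2 by auto

lemma ms3: "mset_set {e 0, e 1, e 0 + e 1} = {#e 0, e 1, e 0 + e 1#}"
  using ne by simp

lemma base2: "good 2 {#{#e 0, e 1, e 0 + e 1#}#}"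
  unfolding good_def using V2' ms3
  by (simp add: numeral_2_eq_2 add_ac)

lemma base3: "good 3 {#{#e 0, e 1, e 0 + e 1#}, image_mset (\<lambda>x. x + e 2) (mset_set (V 2))#}"
proof -
  have V2n: "V 2 = {0, e 0, e 1, e 0 + e 1}" using V2 by (simp add: numeral_2_eq_2)
  have V3: "V 3 = V 2 \<union> (\<lambda>x. x + e 2) ` V 2"
    using V_Suc[of 2] by (simp add: numeral_3_eq_3 numeral_2_eq_2)
  have n0: "0 \<notin> (\<lambda>x. x + e 2) ` V 2"
  proof
    assume "0 \<in> (\<lambda>x. x + e 2) ` V 2"
    then obtain z where z: "z \<in> V 2" "0 = z + e 2" by blast
    have "(z + e 2) 2 = 0" by (simp only: z(2)[symmetric] zero_fun_apply)
    moreover have "(z + e 2) 2 = 1" using z(1) by (simp add: V_def e_def)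
    ultimately show False by simp
  qed
  have V3': "V 3 - {0} = (V 2 - {0}) \<union> (\<lambda>x. x + e 2) ` V 2"
    unfolding V3 using n0 by blast
  have d: "(V 2 - {0}) \<inter> (\<lambda>x. x + e 2) ` V 2 = {}" using V_disj[of 2] by blast
  have sm: "mset_set (V 3 - {0}) = mset_set (V 2 - {0}) + mset_set ((\<lambda>x. x + e 2) ` V 2)"
    unfolding V3' by (rule mset_set_Union) (use d finite_V in auto)
  have im: "image_mset (\<lambda>x. x + e 2) (mset_set (V 2)) = mset_set ((\<lambda>x. x + e 2) ` V 2)"
    by (rule image_mset_mset_set[OF inj_transl])
  have s2: "V 2 - {0} = {e 0, e 1, e 0 + e 1}" using V2' by (simp add: numeral_2_eq_2)
  have quad_sum: "sum_mset (image_mset (\<lambda>x. x + e 2) (mset_set (V 2))) = 0"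
  proof -
    have "sum_mset (image_mset (\<lambda>x. x + e 2) (mset_set (V 2))) = (\<Sum>x\<in>V 2. x + e 2)"
      by (simp add: sum_unfold_sum_mset)
    also have "\<dots> = 0" unfolding V2n using ne by (simp add: add_ac)
    finally show ?thesis .
  qed
  have quad_size: "size (image_mset (\<lambda>x. x + e 2) (mset_set (V 2))) = 4"
    by (simp add: card_V)
  have tsum: "sum_mset {#e 0, e 1, e 0 + e 1#} = 0" by (simp add: add_ac)
  have qne: "image_mset (\<lambda>x. x + e 2) (mset_set (V 2)) \<noteq> {#}"
  proof
    assume "image_mset (\<lambda>x. x + e 2) (mset_set (V 2)) = {#}"
    then have "size (image_mset (\<lambda>x. x + e 2) (mset_set (V 2))) = 0" by (simp only: size_empty)
    then show False using quad_size by simp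
  qed
  have "sum_mset {#{#e 0, e 1, e 0 + e 1#}, image_mset (\<lambda>x. x + e 2) (mset_set (V 2))#}
     = {#e 0, e 1, e 0 + e 1#} + image_mset (\<lambda>x. x + e 2) (mset_set (V 2))" by simp
  also have "\<dots> = mset_set (V 3 - {0})" unfolding sm im s2 ms3 ..
  finally have S: "sum_mset {#{#e 0, e 1, e 0 + e 1#}, image_mset (\<lambda>x. x + e 2) (mset_set (V 2))#}
     = mset_set (V 3 - {0})" .
  show ?thesis unfolding good_def
    using quad_sum quad_size tsum qne S by simp
qed

lemma exists_good: "2 \<le> r \<Longrightarrow> \<exists>F. good r F"
proof (induction r rule: less_induct)
  case (less r)
  show ?case
  proof (cases "r \<le> 3")
    case True
    then have "r = 2 \<or> r = 3" using less.prems by auto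
    then show ?thesis using base2 base3 by blast
  next
    case False
    have "r - 2 < r" "2 \<le> r - 2" using False by auto
    then obtain F where "good (r - 2) F" using less.IH[of "r - 2"] by blast
    then have "\<exists>F. good (Suc (Suc (r - 2))) F" using step[of "r - 2" F] \<open>2 \<le> r - 2\<close> by blast
    moreover have "Suc (Suc (r - 2)) = r" using False by simp
    ultimately show ?thesis by simp
  qed
qed


lemma atom_ge3:
  fixes A B :: "'a::comm_monoid_add multiset"
  assumes selfinv: "\<And>x::'a. x + x = 0" and sqf: "\<And>x. count B x \<le> 1" and nz: "0 \<notin># B"
    and sub: "A \<subseteq># B" and ne: "A \<noteq> {#}" and zs: "sum_mset A = 0"
  shows "3 \<le> size A"
proof (rule ccontr)
  assume "\<not> 3 \<le> size A"
  moreover have "size A \<noteq> 0" using ne by simp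
  ultimately have "size A = 1 \<or> size A = 2" by linarith
  then show False
  proof
    assume "size A = 1"
    then obtain a where A: "A = {#a#}" using size_1_singleton_mset by blast
    then have "a = 0" using zs by simp
    moreover have "a \<in># B" using sub A by (simp add: mset_subset_eq_single)
    ultimately show False using nz by simp
  next
    assume s2: "size A = 2"
    obtain a A1 where A: "A = add_mset a A1" using ne by (metis multiset_cases)
    then have "size A1 = 1" using s2 by simp
    then obtain b where "A1 = {#b#}" using size_1_singleton_mset by blast
    with A have A2: "A = {#a, b#}" by simp
    have ab: "a + b = 0" using zs A2 by simp
    have "b = a"
    proof -
      have "b = (a + a) + b" using selfinv by simp
      also have "\<dots> = a + (a + b)" by (simp add: add.assoc)
      also have "\<dots> = a" using ab by simp
      finally show ?thesis .
    qed
    then have "count A a = 2" using A2 by simp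
    moreover have "count A a \<le> count B a" using sub by (simp add: mset_subset_eq_count)
    ultimately show False using sqf[of a] by simp
  qed
qed

lemma atom_min:
  fixes A B :: "'a::comm_monoid_add multiset"
  assumes selfinv: "\<And>x::'a. x + x = 0" and sqf: "\<And>x. count B x \<le> 1" and nz: "0 \<notin># B"
    and sub: "A \<subseteq># B" and ne: "A \<noteq> {#}" and zs: "sum_mset A = 0" and sz: "size A \<le> 4"
  shows "minimal_zero_sum_seq A"
  unfolding minimal_zero_sum_seq_def zero_sum_seq_def
proof (intro conjI allI impI ne zs)
  fix T assume T: "T \<subseteq># A \<and> T \<noteq> {#} \<and> sum_mset T = 0"
  define U where "U = A - T"
  have AU: "A = T + U" using T unfolding U_def by (simp add: subset_mset.add_diff_inverse)
  have "sum_mset A = sum_mset T + sum_mset U" using AU by simp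
  then have sU: "sum_mset U = 0" using zs T by simp
  show "T = A"
  proof (rule ccontr)
    assume "T \<noteq> A"
    then have Une: "U \<noteq> {#}" using AU by auto
    have "U \<subseteq># A" unfolding AU by simp
    then have UB: "U \<subseteq># B" using sub by (rule subset_mset.order_trans)
    have "T \<subseteq># A" using T by blast
    then have TB: "T \<subseteq># B" using sub by (rule subset_mset.order_trans)
    have "3 \<le> size U" by (rule atom_ge3[OF selfinv sqf nz UB Une sU])
    moreover have "3 \<le> size T" using atom_ge3[OF selfinv sqf nz TB] T by blast
    moreover have "size A = size T + size U" using AU by simp
    ultimately show False using sz by simp
  qed
qed

lemma mem_sum_sub: "A \<in># F \<Longrightarrow> A \<subseteq># sum_mset F"
proof -
  assume "A \<in># F"
  then obtain F' where "F = add_mset A F'" by (blast dest: multi_member_split)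
  then show ?thesis by simp
qed

lemma sum_sum: "sum_mset (sum_mset (F :: 'a::comm_monoid_add multiset multiset)) = sum_mset (image_mset sum_mset F)"
  by (induction F) simp_all

lemma sum_image_zero: "(\<forall>A\<in>#F. sum_mset A = (0::'a::comm_monoid_add)) \<Longrightarrow> sum_mset (image_mset sum_mset F) = 0"
  by (induction F) simp_all

lemma size_sum_ge: "(\<forall>A\<in>#(F::'a multiset multiset). 3 \<le> size A) \<Longrightarrow> 3 * size F \<le> size (sum_mset F)"
proof (induction F)
  case empty then show ?case by simp
next
  case (add x F)
  then have a: "3 \<le> size x" "3 * size F \<le> size (sum_mset F)" by auto
  have "size (sum_mset (add_mset x F)) = size x + size (sum_mset F)"
    by simp
  then show ?case using a by simp
qed

lemma img_sum: "sum_mset (image_mset (image_mset h) F) = image_mset h (sum_mset F)"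
  by (induction F) simp_all

theorem proposition7p6:
  fixes B :: "(bit ^ 'n) multiset"
  assumes "CARD('n) \<ge> 2"
    and "B = mset_set (UNIV - {0})"
  shows "zero_sum_seq B \<and>
         (2 ^ CARD('n) - 1) div 3 \<in> lengths B \<and>
         (\<forall>t \<in> lengths B. t \<le> (2 ^ CARD('n) - 1) div 3)"
proof -
  define n where "n = CARD('n)"
  obtain idx :: "'n \<Rightarrow> nat" where bij: "bij_betw idx UNIV {0..<n}"
    using ex_bij_betw_finite_nat[of "UNIV::'n set"] unfolding n_def by auto
  have idx_lt: "idx i < n" for i using bij by (auto simp: bij_betw_def)
  have idx_inj: "inj idx" using bij by (simp add: bij_betw_def)
  have idx_surj: "idx ` UNIV = {0..<n}" using bij by (simp add: bij_betw_def)
  define \<psi> :: "vv \<Rightarrow> bit ^ 'n" where "\<psi> x = (\<chi> i. x (idx i))" for x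
  have psi_add: "\<psi> (a + b) = \<psi> a + \<psi> b" for a b by (simp add: \<psi>_def vec_eq_iff)
  have psi0: "\<psi> 0 = 0" by (simp add: \<psi>_def vec_eq_iff)
  have psi_sum: "sum_mset (image_mset \<psi> A) = \<psi> (sum_mset A)" for A
  proof (induction A)
    case empty show ?case by (simp only: image_mset_empty sum_mset.empty psi0)
  next
    case (add x A) then show ?case by (simp only: image_mset_add_mset sum_mset.add_mset psi_add)
  qed
  have psi_inj: "inj_on \<psi> (V n)"
  proof (rule inj_onI)
    fix x y assume x: "x \<in> V n" and y: "y \<in> V n" and eq: "\<psi> x = \<psi> y"
    show "x = y"
    proof
      fix k show "x k = y k"
      proof (cases "k < n")
        case True
        then obtain i where i: "k = idx i" using idx_surj by (metis atLeastLessThan_iff imageE le0)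
        have "(\<psi> x) $ i = (\<psi> y) $ i" using eq by simp
        then show ?thesis using i by (simp add: \<psi>_def)
      next
        case False then show ?thesis using x y by (simp add: V_def)
      qed
    qed
  qed
  have psi_surj: "\<psi> ` V n = UNIV"
  proof -
    { fix v :: "bit ^ 'n"
      define x where "x = (\<lambda>k. if k < n then v $ (inv_into UNIV idx k) else 0)"
      have "x \<in> V n" by (simp add: x_def V_def)
      moreover have "\<psi> x = v"
        by (simp add: \<psi>_def x_def vec_eq_iff idx_lt inv_into_f_f[OF idx_inj])
      ultimately have "v \<in> \<psi> ` V n" by blast }
    then show ?thesis by blast
  qed
  have n2: "2 \<le> n" using assms(1) by (simp add: n_def)
  obtain F0 where G: "good n F0" using exists_good[OF n2] by blast
  have at0: "\<forall>A\<in>#F0. A \<noteq> {#} \<and> size A \<le> 4 \<and> sum_mset A = 0"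
    and sF0: "sum_mset F0 = mset_set (V n - {0})" and szF0: "size F0 = (2^n - 1) div 3"
    using G unfolding good_def by auto
  define F where "F = image_mset (image_mset \<psi>) F0"
  have "sum_mset F = image_mset \<psi> (mset_set (V n - {0}))"
    unfolding F_def img_sum sF0 ..
  also have "\<dots> = mset_set (\<psi> ` (V n - {0}))"
    by (rule image_mset_mset_set) (use psi_inj in \<open>auto intro: inj_on_subset\<close>)
  also have "\<psi> ` (V n - {0}) = UNIV - {0}"
  proof -
    have "\<psi> ` (V n - {0}) = \<psi> ` V n - \<psi> ` {0}"
      by (rule inj_on_image_set_diff[OF psi_inj]) auto
    then show ?thesis by (simp only: image_insert image_empty psi0 psi_surj)
  qed
  finally have sF: "sum_mset F = B" using assms(2) by simp
  have sqf: "count B x \<le> 1" for x using assms(2) by (simp add: count_mset_set')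
  have nz: "(0::bit^'n) \<notin># B" using assms(2) count_mset_set(3)[of 0 "UNIV - {0::bit^'n}"]
    by (simp add: not_in_iff)
  have selfinv: "x + x = (0::bit^'n)" for x by (simp add: vec_eq_iff)
  have atF: "A \<noteq> {#} \<and> size A \<le> 4 \<and> sum_mset A = 0" if "A \<in># F" for A
  proof -
    obtain A0 where A0: "A0 \<in># F0" "A = image_mset \<psi> A0" using \<open>A \<in># F\<close> unfolding F_def by auto
    then show ?thesis using at0 psi_sum[of A0] psi0 by auto
  qed
  have minF: "minimal_zero_sum_seq A" if "A \<in># F" for A
  proof -
    have "A \<subseteq># B" using mem_sum_sub[OF that] sF by simp
    then show ?thesis using atom_min[OF selfinv sqf nz] atF[OF that] by blast
  qed
  have cardU: "card (UNIV :: (bit^'n) set) = 2^n"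
    using card_image[OF psi_inj] psi_surj card_V[of n] by simp
  have sizeB: "size B = 2^n - 1"
    using assms(2) cardU by (simp add: card_Diff_singleton)
  have z: "zero_sum_seq B"
    unfolding zero_sum_seq_def using sF[symmetric] sum_sum[of F] sum_image_zero[of F] atF by auto
  have l: "(2 ^ CARD('n) - 1) div 3 \<in> lengths B"
  proof -
    have "size F = (2 ^ CARD('n) - 1) div 3" using szF0 by (simp add: F_def n_def)
    then show ?thesis unfolding lengths_def using minF sF by blast
  qed
  have u: "t \<le> (2 ^ CARD('n) - 1) div 3" if tL: "t \<in> lengths B" for t
  proof -
    obtain H where H: "\<forall>A\<in>#H. minimal_zero_sum_seq A" "sum_mset H = B" "size H = t"
      using tL unfolding lengths_def by auto
    have "\<forall>A\<in>#H. 3 \<le> size A"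
    proof
      fix A assume A: "A \<in># H"
      have "A \<subseteq># B" using mem_sum_sub[OF A] H(2) by simp
      moreover have "A \<noteq> {#}" "sum_mset A = 0" using H(1) A
        by (auto simp: minimal_zero_sum_seq_def zero_sum_seq_def)
      ultimately show "3 \<le> size A" using atom_ge3[OF selfinv sqf nz] by blast
    qed
    then have "3 * t \<le> 2^n - 1" using size_sum_ge[of H] H sizeB by simp
    then show ?thesis unfolding n_def by linarith
  qed
  show ?thesis using z l u by blast
qed

end
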